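(* Let $\epsilon_1>0$ and let $\epsilon_5>0$ be a constant with $\left(\frac{\log e}{8}\right)\epsilon_5^4>14\epsilon_1$. Let $S\subseteq V$ be nonempty, let $v$ be uniform in $S$, and define $X_i,Y_i$ as in the context. If $\sum_{i=1}^n H(X_i\mid X_{<i},Y_{<i})\ge\left(1-\frac{6\epsilon_1}{\log n}\right)\log k$, then (for $n$ sufficiently large) all but at most $\epsilon_5 n$ of the variables $i\in[n]$ are typical.
   Context: Setting: variables $x_1,\dots,x_n$, constant-size alphabet $A$, $\rho=\sqrt n\log\log n$, $k=\binom n\rho$. $V$ is the set of pairs $v=(T,y)$ with $T\subseteq[n]$, $|T|=\rho$, $y:T\to A$. For $v=(T,y)$ uniform in $S\subseteq V$: $X_i$ is the indicator of $i\in T$, $Y_i=y(i)$ if $X_i=1$ and $Y_i=\bot$ otherwise. A prefix of length $i-1$ is a value $w_{i-1}$ of $(X_{<i},Y_{<i})$. A prefix $w_{i-1}$ is typical if $(1-\epsilon_5)\rho/n<\Pr[X_i=1\mid (X_{<i},Y_{<i})=w_{i-1}]<(1+\epsilon_5)\rho/n$. A variable $i$ is typical if $\sum_{\text{typical } w_{i-1}}\Pr[(X_{<i},Y_{<i})=w_{i-1}]\ge1-\epsilon_5$. $H$ denotes Shannon entropy, logs base 2. *)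

theory Defs
  imports Complex_Main "HOL-Library.FuncSet"
begin

definition rho :: "nat \<Rightarrow> nat" where
  "rho n = nat \<lfloor>sqrt (real n) * log 2 (log 2 (real n))\<rfloor>"

definition kk :: "nat \<Rightarrow> nat" where
  "kk n = n choose rho n"

definition VV :: "nat \<Rightarrow> 'a set \<Rightarrow> (nat set \<times> (nat \<Rightarrow> 'a)) set" where
  "VV n A = {(T, y). T \<subseteq> {1..n} \<and> card T = rho n \<and> y \<in> T \<rightarrow>\<^sub>E A}"

definition prob_unif :: "'v set \<Rightarrow> ('v \<Rightarrow> bool) \<Rightarrow> real" where
  "prob_unif S P = real (card {v \<in> S. P v}) / real (card S)"

definition Xv :: "nat \<Rightarrow> nat set \<times> (nat \<Rightarrow> 'a) \<Rightarrow> bool" where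
  "Xv i v = (i \<in> fst v)"

(* Y_i = y(i) if i \<in> T, and \<bottom> (None) otherwise *)
definition Yv :: "nat \<Rightarrow> nat set \<times> (nat \<Rightarrow> 'a) \<Rightarrow> 'a option" where
  "Yv i v = (if i \<in> fst v then Some (snd v i) else None)"

definition prefix :: "nat \<Rightarrow> nat set \<times> (nat \<Rightarrow> 'a) \<Rightarrow> (bool \<times> 'a option) list" where
  "prefix i v = map (\<lambda>j. (Xv j v, Yv j v)) [1..<i]"

definition cond_entropy :: "'v set \<Rightarrow> ('v \<Rightarrow> 'x) \<Rightarrow> ('v \<Rightarrow> 'w) \<Rightarrow> real" where
  "cond_entropy S X W =
     (\<Sum>p \<in> (\<lambda>v. (X v, W v)) ` S.
        prob_unif S (\<lambda>v. (X v, W v) = p) *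
        log 2 (prob_unif S (\<lambda>v. W v = snd p) / prob_unif S (\<lambda>v. (X v, W v) = p)))"

definition cond_prob_X :: "(nat set \<times> (nat \<Rightarrow> 'a)) set \<Rightarrow> nat \<Rightarrow> (bool \<times> 'a option) list \<Rightarrow> real" where
  "cond_prob_X S i w = prob_unif S (\<lambda>v. Xv i v \<and> prefix i v = w) / prob_unif S (\<lambda>v. prefix i v = w)"

definition typical_prefix :: "real \<Rightarrow> nat \<Rightarrow> (nat set \<times> (nat \<Rightarrow> 'a)) set \<Rightarrow> nat \<Rightarrow> (bool \<times> 'a option) list \<Rightarrow> bool" where
  "typical_prefix eps n S i w \<longleftrightarrow>
     (1 - eps) * real (rho n) / real n < cond_prob_X S i w \<and>
     cond_prob_X S i w < (1 + eps) * real (rho n) / real n"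

definition typical_var :: "real \<Rightarrow> nat \<Rightarrow> (nat set \<times> (nat \<Rightarrow> 'a)) set \<Rightarrow> nat \<Rightarrow> bool" where
  "typical_var eps n S i \<longleftrightarrow>
     (\<Sum>w \<in> {w \<in> prefix i ` S. typical_prefix eps n S i w}. prob_unif S (\<lambda>v. prefix i v = w)) \<ge> 1 - eps"

end

theory Submission
  imports Defs "HOL-Real_Asymp.Real_Asymp"
begin


lemma ln_sqrt_bound:
  fixes u :: real assumes "0 < u" shows "2 * (1 - 1 / sqrt u) \<le> ln u"
proof -
  have s: "sqrt u > 0" using assms by simp
  have "ln (1 / sqrt u) \<le> 1 / sqrt u - 1" using s by (intro ln_le_minus_one) simp
  moreover have "ln (1 / sqrt u) = - ln (sqrt u)" using s by (simp add: ln_div)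
  moreover have "ln u = 2 * ln (sqrt u)"
    using assms by (simp add: ln_sqrt)
  ultimately show ?thesis by (smt (verit))
qed

lemma alnca:
  fixes a c :: real assumes "0 \<le> a" "0 < c"
  shows "a * ln (c / a) \<le> -2 * a + 2 * sqrt (a * c)"
proof (cases "a = 0")
  case True then show ?thesis by simp
next
  case False
  then have a: "a > 0" using assms by simp
  have "2 * (1 - 1 / sqrt (a / c)) \<le> ln (a / c)" using a assms by (intro ln_sqrt_bound) simp
  moreover have "ln (c / a) = - ln (a / c)" using a assms by (simp add: ln_div)
  moreover have "1 / sqrt (a / c) = sqrt (c / a)" by (simp add: real_sqrt_divide)
  ultimately have "ln (c / a) \<le> -2 + 2 * sqrt (c / a)" by (smt (verit))
  then have "a * ln (c / a) \<le> a * (-2 + 2 * sqrt (c / a))" using a by (intro mult_left_mono) auto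
  moreover have "a * sqrt (c / a) = sqrt (a * c)"
  proof -
    have "a * c = a^2 * (c / a)" using a by (simp add: power2_eq_square)
    then have "sqrt (a * c) = sqrt (a^2) * sqrt (c / a)" by (metis real_sqrt_mult)
    then show ?thesis using a by simp
  qed
  ultimately show ?thesis by (simp add: algebra_simps)
qed

lemma perw_ln:
  fixes a1 a0 q :: real
  assumes "0 \<le> a1" "0 \<le> a0" "0 < a1 + a0" "0 < q" "q < 1"
  shows "a1 * ln ((a1 + a0) / a1) + a0 * ln ((a1 + a0) / a0)
         \<le> a1 * ln (1 / q) + a0 * ln (1 / (1 - q)) - (sqrt a1 - sqrt ((a1 + a0) * q))^2"
proof -
  define b where "b = a1 + a0"
  have b: "b > 0" using assms b_def by simp
  have e1: "a1 * ln (b / a1) = a1 * ln (1 / q) + a1 * ln (b * q / a1)"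
  proof (cases "a1 = 0")
    case False
    then have "a1 > 0" using assms by simp
    then have "ln (b / a1) = ln (1 / q) + ln (b * q / a1)"
      using b assms by (simp add: ln_div ln_mult)
    then show ?thesis by (simp add: algebra_simps)
  qed simp
  have e0: "a0 * ln (b / a0) = a0 * ln (1 / (1 - q)) + a0 * ln (b * (1 - q) / a0)"
  proof (cases "a0 = 0")
    case False
    then have "a0 > 0" using assms by simp
    then have "ln (b / a0) = ln (1 / (1 - q)) + ln (b * (1 - q) / a0)"
      using b assms by (simp add: ln_div ln_mult)
    then show ?thesis by (simp add: algebra_simps)
  qed simp
  have i1: "a1 * ln (b * q / a1) \<le> -2 * a1 + 2 * sqrt (a1 * (b * q))"
    using assms b by (intro alnca) auto
  have i0: "a0 * ln (b * (1 - q) / a0) \<le> -2 * a0 + 2 * sqrt (a0 * (b * (1 - q)))"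
    using assms b by (intro alnca) auto
  have sq0: "0 \<le> (sqrt a0 - sqrt (b * (1 - q)))^2" by simp
  have x1: "(sqrt a1 - sqrt (b * q))^2 = a1 + b * q - 2 * sqrt (a1 * (b * q))"
    using assms b by (simp add: power2_diff real_sqrt_mult power_mult_distrib)
  have x0: "(sqrt a0 - sqrt (b * (1 - q)))^2 = a0 + b * (1 - q) - 2 * sqrt (a0 * (b * (1 - q)))"
    using assms b by (simp add: power2_diff real_sqrt_mult power_mult_distrib)
  have "b * (1 - q) = b - b * q" by (simp add: algebra_simps)
  show ?thesis unfolding b_def[symmetric]
    using e1 e0 i1 i0 sq0 x1 x0 b_def \<open>b * (1 - q) = b - b * q\<close> by linarith
qed

lemma perw_log:
  fixes a1 a0 q :: real
  assumes "0 \<le> a1" "0 \<le> a0" "0 < a1 + a0" "0 < q" "q < 1"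
  shows "a1 * log 2 ((a1 + a0) / a1) + a0 * log 2 ((a1 + a0) / a0)
         \<le> a1 * log 2 (1 / q) + a0 * log 2 (1 / (1 - q)) - (sqrt a1 - sqrt ((a1 + a0) * q))^2 / ln 2"
proof -
  have l: "ln (2::real) > 0" by simp
  have "(a1 * ln ((a1 + a0) / a1) + a0 * ln ((a1 + a0) / a0)) / ln 2
         \<le> (a1 * ln (1 / q) + a0 * ln (1 / (1 - q)) - (sqrt a1 - sqrt ((a1 + a0) * q))^2) / ln 2"
    using perw_ln[OF assms] l by (intro divide_right_mono) auto
  then show ?thesis by (simp add: log_def add_divide_distrib diff_divide_distrib)
qed

lemma sq_gap:
  fixes p q e :: real
  assumes "0 \<le> p" "0 < q" "0 < e" "e < 1" "p \<le> (1 - e) * q \<or> (1 + e) * q \<le> p"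
  shows "q * e^2 / 9 \<le> (sqrt p - sqrt q)^2"
  using assms(5)
proof
  assume h: "p \<le> (1 - e) * q"
  have "sqrt p \<le> sqrt (1 - e) * sqrt q" using h by (simp add: real_sqrt_mult[symmetric])
  moreover have "sqrt (1 - e) \<le> 1 - e / 2"
    using assms by (intro real_le_lsqrt) (auto simp: power2_eq_square algebra_simps)
  ultimately have "sqrt p \<le> (1 - e/2) * sqrt q"
    by (meson mult_right_mono order.trans real_sqrt_ge_zero less_imp_le assms(2))
  then have "e / 2 * sqrt q \<le> sqrt q - sqrt p" by (simp add: algebra_simps)
  moreover have "0 \<le> e / 2 * sqrt q" using assms by simp
  ultimately have "(e / 2 * sqrt q)^2 \<le> (sqrt q - sqrt p)^2" by (intro power_mono) auto
  moreover have "(e / 2 * sqrt q)^2 = q * e^2 / 4" using assms by (simp add: power_mult_distrib power_divide)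
  ultimately have "q * e^2 / 4 \<le> (sqrt p - sqrt q)^2" by (simp add: power2_commute)
  moreover have "q * e^2 / 9 \<le> q * e^2 / 4" using assms by simp
  ultimately show ?thesis by linarith
next
  assume h: "(1 + e) * q \<le> p"
  have ee: "e * e < e" using assms by (simp add: mult_less_cancel_left1)
  have "sqrt (1 + e) * sqrt q \<le> sqrt p" using h by (simp add: real_sqrt_mult[symmetric])
  moreover have "1 + e / 3 \<le> sqrt (1 + e)"
  proof (rule real_le_rsqrt)
    have "(1 + e/3)^2 = 1 + 2*e/3 + e*e/9" by (simp add: power2_eq_square field_simps)
    moreover have "e*e/9 \<le> e/9" using ee by simp
    ultimately show "(1 + e/3)^2 \<le> 1 + e" using assms by linarith
  qed
  ultimately have "(1 + e/3) * sqrt q \<le> sqrt p"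
    by (meson mult_right_mono order.trans real_sqrt_ge_zero less_imp_le assms(2))
  then have "e / 3 * sqrt q \<le> sqrt p - sqrt q" by (simp add: algebra_simps)
  moreover have "0 \<le> e / 3 * sqrt q" using assms by simp
  ultimately have "(e / 3 * sqrt q)^2 \<le> (sqrt p - sqrt q)^2" by (intro power_mono) auto
  then show ?thesis using assms by (simp add: power_mult_distrib power_divide mult.commute)
qed



lemma sum_group:
  fixes X :: "'v \<Rightarrow> bool" and W :: "'v \<Rightarrow> 'w" and g :: "bool \<Rightarrow> 'w \<Rightarrow> real"
  assumes "finite S"
  shows "(\<Sum>v\<in>S. g (X v) (W v)) = (\<Sum>w\<in>W ` S. real (card {v\<in>S. X v \<and> W v = w}) * g True w
            + real (card {v\<in>S. \<not> X v \<and> W v = w}) * g False w)"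
proof -
  have "(\<Sum>v\<in>S. g (X v) (W v)) = (\<Sum>w\<in>W ` S. \<Sum>v\<in>{v\<in>S. W v = w}. g (X v) (W v))"
    using assms by (rule sum.image_gen)
  also have "\<dots> = (\<Sum>w\<in>W ` S. real (card {v\<in>S. X v \<and> W v = w}) * g True w
            + real (card {v\<in>S. \<not> X v \<and> W v = w}) * g False w)"
  proof (rule sum.cong[OF refl])
    fix w
    have split: "{v\<in>S. W v = w} = {v\<in>S. X v \<and> W v = w} \<union> {v\<in>S. \<not> X v \<and> W v = w}" by auto
    have "(\<Sum>v\<in>{v\<in>S. W v = w}. g (X v) (W v)) = (\<Sum>v\<in>{v\<in>S. X v \<and> W v = w}. g (X v) (W v))
          + (\<Sum>v\<in>{v\<in>S. \<not> X v \<and> W v = w}. g (X v) (W v))"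
      unfolding split using assms by (intro sum.union_disjoint) auto
    also have "(\<Sum>v\<in>{v\<in>S. X v \<and> W v = w}. g (X v) (W v)) = (\<Sum>v\<in>{v\<in>S. X v \<and> W v = w}. g True w)"
      by (rule sum.cong) auto
    also have "(\<Sum>v\<in>{v\<in>S. \<not> X v \<and> W v = w}. g (X v) (W v)) = (\<Sum>v\<in>{v\<in>S. \<not> X v \<and> W v = w}. g False w)"
      by (rule sum.cong) auto
    finally show "(\<Sum>v\<in>{v\<in>S. W v = w}. g (X v) (W v)) = real (card {v\<in>S. X v \<and> W v = w}) * g True w
            + real (card {v\<in>S. \<not> X v \<and> W v = w}) * g False w" by simp
  qed
  finally show ?thesis .
qed

lemma entropy_sum:
  fixes X :: "'v \<Rightarrow> bool" and W :: "'v \<Rightarrow> 'w"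
  assumes fin: "finite S" and ne: "S \<noteq> {}"
  shows "real (card S) * cond_entropy S X W =
    (\<Sum>w\<in>W ` S. real (card {v\<in>S. X v \<and> W v = w}) * log 2 (real (card {v\<in>S. W v = w}) / real (card {v\<in>S. X v \<and> W v = w}))
       + real (card {v\<in>S. \<not> X v \<and> W v = w}) * log 2 (real (card {v\<in>S. W v = w}) / real (card {v\<in>S. \<not> X v \<and> W v = w})))"
proof -
  define N where "N = real (card S)"
  have N: "N > 0" using fin ne N_def by (simp add: card_gt_0_iff)
  define f where "f = (\<lambda>v. (X v, W v))"
  define c where "c = (\<lambda>p. real (card {v\<in>S. f v = p}))"
  define cW where "cW = (\<lambda>w. real (card {v\<in>S. W v = w}))"
  define g where "g = (\<lambda>x w. log 2 (cW w / real (card {u\<in>S. (X u, W u) = (x, w)})))"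
  have "N * cond_entropy S X W = (\<Sum>p\<in>f ` S. N * (c p / N * log 2 ((cW (snd p) / N) / (c p / N))))"
    unfolding cond_entropy_def prob_unif_def N_def[symmetric] f_def c_def cW_def
    by (simp add: sum_distrib_left)
  also have "\<dots> = (\<Sum>p\<in>f ` S. c p * log 2 (cW (snd p) / c p))"
    using N by (intro sum.cong refl) (simp add: field_simps)
  also have "\<dots> = (\<Sum>p\<in>f ` S. \<Sum>v\<in>{v\<in>S. f v = p}. g (X v) (W v))"
  proof (intro sum.cong refl)
    fix p assume "p \<in> f ` S"
    have "(\<Sum>v\<in>{v\<in>S. f v = p}. g (X v) (W v)) = (\<Sum>v\<in>{v\<in>S. f v = p}. log 2 (cW (snd p) / c p))"
      by (intro sum.cong refl) (auto simp: g_def f_def c_def)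
    then show "c p * log 2 (cW (snd p) / c p) = (\<Sum>v\<in>{v\<in>S. f v = p}. g (X v) (W v))"
      by (simp add: c_def)
  qed
  also have "\<dots> = (\<Sum>v\<in>S. g (X v) (W v))"
    using fin by (rule sum.image_gen[symmetric])
  also have "\<dots> = (\<Sum>w\<in>W ` S. real (card {v\<in>S. X v \<and> W v = w}) * g True w
            + real (card {v\<in>S. \<not> X v \<and> W v = w}) * g False w)"
    using fin by (rule sum_group)
  finally show ?thesis unfolding N_def g_def cW_def by simp
qed

lemma main_i:
  fixes X :: "'v \<Rightarrow> bool" and W :: "'v \<Rightarrow> 'w"
  assumes fin: "finite S" and ne: "S \<noteq> {}" and q: "0 < q" "q < 1"
  shows "real (card S) * cond_entropy S X W \<le> real (card {v\<in>S. X v}) * log 2 (1/q)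
     + real (card {v\<in>S. \<not> X v}) * log 2 (1/(1-q))
     - (\<Sum>w\<in>W`S. (sqrt (real (card {v\<in>S. X v \<and> W v = w})) - sqrt (real (card {v\<in>S. W v = w}) * q))^2) / ln 2"
proof -
  define cT where "cT = (\<lambda>w. real (card {v\<in>S. X v \<and> W v = w}))"
  define cF where "cF = (\<lambda>w. real (card {v\<in>S. \<not> X v \<and> W v = w}))"
  have cW: "real (card {v\<in>S. W v = w}) = cT w + cF w" for w
  proof -
    have "{v\<in>S. W v = w} = {v\<in>S. X v \<and> W v = w} \<union> {v\<in>S. \<not> X v \<and> W v = w}" by auto
    then have "card {v\<in>S. W v = w} = card {v\<in>S. X v \<and> W v = w} + card {v\<in>S. \<not> X v \<and> W v = w}"
      using fin by (simp add: card_Un_disjoint disjoint_iff)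
    then show ?thesis unfolding cT_def cF_def by simp
  qed
  have pos: "cT w + cF w > 0" if "w \<in> W ` S" for w
  proof -
    from that obtain v where "v \<in> S" "W v = w" by auto
    then have "{v\<in>S. W v = w} \<noteq> {}" by auto
    then have "card {v\<in>S. W v = w} > 0" using fin by (simp add: card_gt_0_iff)
    then show ?thesis using cW[of w] by simp
  qed
  have "real (card S) * cond_entropy S X W = (\<Sum>w\<in>W ` S. cT w * log 2 ((cT w + cF w) / cT w) + cF w * log 2 ((cT w + cF w) / cF w))"
    unfolding entropy_sum[OF fin ne] cW cT_def cF_def by simp
  also have "\<dots> \<le> (\<Sum>w\<in>W ` S. cT w * log 2 (1 / q) + cF w * log 2 (1 / (1 - q)) - (sqrt (cT w) - sqrt ((cT w + cF w) * q))^2 / ln 2)"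
    using q pos by (intro sum_mono perw_log) (auto simp: cT_def cF_def)
  also have "\<dots> = (\<Sum>w\<in>W ` S. cT w) * log 2 (1 / q) + (\<Sum>w\<in>W ` S. cF w) * log 2 (1 / (1 - q))
       - (\<Sum>w\<in>W`S. (sqrt (cT w) - sqrt ((cT w + cF w) * q))^2) / ln 2"
    by (simp add: sum.distrib sum_subtractf sum_distrib_right sum_divide_distrib)
  also have "(\<Sum>w\<in>W ` S. cT w) = real (card {v\<in>S. X v})"
  proof -
    have "(\<Sum>v\<in>S. (\<lambda>x w. if x then 1 else 0 :: real) (X v) (W v)) = (\<Sum>w\<in>W ` S. cT w)"
      using sum_group[OF fin, where g = "\<lambda>x w. if x then 1 else 0" and X = X and W = W] unfolding cT_def by simp
    moreover have "(\<Sum>v\<in>S. (\<lambda>x w. if x then 1 else 0 :: real) (X v) (W v)) = real (card {v\<in>S. X v})"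
      using fin by (simp add: sum.inter_filter[symmetric])
    ultimately show ?thesis by simp
  qed
  also have "(\<Sum>w\<in>W ` S. cF w) = real (card {v\<in>S. \<not> X v})"
  proof -
    have "(\<Sum>v\<in>S. (\<lambda>x w. if x then 0 else 1 :: real) (X v) (W v)) = (\<Sum>w\<in>W ` S. cF w)"
      using sum_group[OF fin, where g = "\<lambda>x w. if x then 0 else 1" and X = X and W = W] unfolding cF_def by simp
    moreover have "(\<Sum>v\<in>S. (\<lambda>x w. if x then 0 else 1 :: real) (X v) (W v)) = real (card {v\<in>S. \<not> X v})"
    proof -
      have "(\<Sum>v\<in>S. (if X v then 0 else 1 :: real)) = (\<Sum>v\<in>S. if \<not> X v then 1 else 0)"
        by (intro sum.cong) auto
      also have "\<dots> = real (card {v\<in>S. \<not> X v})" using fin by (simp add: sum.inter_filter[symmetric])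
      finally show ?thesis by simp
    qed
    ultimately show ?thesis by simp
  qed
  finally show ?thesis unfolding cW cT_def cF_def by simp
qed



lemma pen_bound:
  fixes S :: "(nat set \<times> (nat \<Rightarrow> 'a)) set"
  assumes fin: "finite S" and ne: "S \<noteq> {}" and e: "0 < e" "e < 1"
    and q: "q = real (rho n) / real n" "0 < q"
    and nt: "\<not> typical_var e n S i"
  shows "real (card S) * q * e^3 / 9 \<le> (\<Sum>w\<in>prefix i ` S. (sqrt (real (card {v\<in>S. Xv i v \<and> prefix i v = w}))
            - sqrt (real (card {v\<in>S. prefix i v = w}) * q))^2)"
proof -
  define N where "N = real (card S)"
  have N: "N > 0" using fin ne N_def by (simp add: card_gt_0_iff)
  define I where "I = prefix i ` S"
  define cW where "cW = (\<lambda>w. real (card {v\<in>S. prefix i v = w}))"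
  define cT where "cT = (\<lambda>w. real (card {v\<in>S. Xv i v \<and> prefix i v = w}))"
  define pen where "pen = (\<lambda>w. (sqrt (cT w) - sqrt (cW w * q))^2)"
  define Ty where "Ty = {w\<in>I. typical_prefix e n S i w}"
  define At where "At = I - Ty"
  have finI: "finite I" using fin I_def by simp
  have P: "prob_unif S (\<lambda>v. prefix i v = w) = cW w / N" for w
    unfolding prob_unif_def cW_def N_def by simp
  have sumcW: "(\<Sum>w\<in>I. cW w) = N"
  proof -
    have "(\<Sum>v\<in>S. (1::real)) = (\<Sum>w\<in>I. \<Sum>v\<in>{v\<in>S. prefix i v = w}. 1)"
      unfolding I_def using fin by (rule sum.image_gen)
    then show ?thesis unfolding cW_def N_def by simp
  qed
  have sumP: "(\<Sum>w\<in>I. cW w / N) = 1" using sumcW N by (simp add: sum_divide_distrib[symmetric])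
  have ty: "(\<Sum>w\<in>Ty. cW w / N) < 1 - e"
    using nt unfolding typical_var_def Ty_def I_def P by simp
  have split: "(\<Sum>w\<in>I. cW w / N) = (\<Sum>w\<in>Ty. cW w / N) + (\<Sum>w\<in>At. cW w / N)"
  proof -
    have "I = Ty \<union> At" "Ty \<inter> At = {}" unfolding At_def Ty_def by auto
    moreover have "finite Ty" "finite At" using finI unfolding At_def Ty_def by auto
    ultimately show ?thesis by (simp add: sum.union_disjoint)
  qed
  have at: "(\<Sum>w\<in>At. cW w / N) > e" using sumP ty split by linarith
  have pw: "cW w * (q * e^2 / 9) \<le> pen w" if w: "w \<in> At" for w
  proof -
    from w have wI: "w \<in> I" and nty: "\<not> typical_prefix e n S i w" unfolding At_def Ty_def by auto
    from wI obtain v where "v \<in> S" "prefix i v = w" unfolding I_def by auto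
    then have "{v\<in>S. prefix i v = w} \<noteq> {}" by blast
    then have cWp: "cW w > 0" using fin unfolding cW_def by (simp add: card_gt_0_iff)
    define p where "p = cT w / cW w"
    have p0: "0 \<le> p" unfolding p_def cT_def using cWp by simp
    have cp: "cond_prob_X S i w = p"
      unfolding cond_prob_X_def prob_unif_def p_def cT_def cW_def using N N_def by simp
    have "\<not> ((1 - e) * q < p \<and> p < (1 + e) * q)"
      using nty unfolding typical_prefix_def cp q(1) by simp
    then have "p \<le> (1 - e) * q \<or> (1 + e) * q \<le> p" by linarith
    then have g: "q * e^2 / 9 \<le> (sqrt p - sqrt q)^2" using sq_gap p0 q(2) e by blast
    have "cT w = cW w * p" unfolding p_def using cWp by simp
    then have "sqrt (cT w) = sqrt (cW w) * sqrt p" by (simp add: real_sqrt_mult)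
    moreover have "sqrt (cW w * q) = sqrt (cW w) * sqrt q" by (simp add: real_sqrt_mult)
    ultimately have "pen w = (sqrt (cW w) * (sqrt p - sqrt q))^2" unfolding pen_def by (simp add: algebra_simps)
    also have "\<dots> = cW w * (sqrt p - sqrt q)^2" using cWp by (simp add: power_mult_distrib)
    finally show ?thesis using g cWp by (simp add: mult_left_mono)
  qed
  have "(\<Sum>w\<in>At. pen w) \<le> (\<Sum>w\<in>I. pen w)"
    using finI unfolding At_def pen_def by (intro sum_mono2) auto
  moreover have "(\<Sum>w\<in>At. cW w * (q * e^2 / 9)) \<le> (\<Sum>w\<in>At. pen w)"
    using pw by (intro sum_mono) auto
  moreover have "(\<Sum>w\<in>At. cW w * (q * e^2 / 9)) = N * (q * e^2 / 9) * (\<Sum>w\<in>At. cW w / N)"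
  proof -
    have "(\<Sum>w\<in>At. cW w * (q * e^2 / 9)) = (\<Sum>w\<in>At. cW w) * (q * e^2 / 9)" by (simp add: sum_distrib_right)
    also have "\<dots> = N * (q * e^2 / 9) * ((\<Sum>w\<in>At. cW w) / N)" using N by simp
    also have "(\<Sum>w\<in>At. cW w) / N = (\<Sum>w\<in>At. cW w / N)" by (simp add: sum_divide_distrib)
    finally show ?thesis .
  qed
  moreover have "N * (q * e^2 / 9) * e \<le> N * (q * e^2 / 9) * (\<Sum>w\<in>At. cW w / N)"
    using at N q(2) by (intro mult_left_mono) auto
  ultimately have "N * (q * e^2 / 9) * e \<le> (\<Sum>w\<in>I. pen w)" by linarith
  moreover have "N * (q * e^2 / 9) * e = N * q * e^3 / 9" by (simp add: power3_eq_cube power2_eq_square)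
  ultimately have "N * q * e^3 / 9 \<le> (\<Sum>w\<in>I. pen w)" by linarith
  then show ?thesis unfolding pen_def I_def cT_def cW_def N_def by simp
qed



lemma finite_VV:
  assumes A: "finite A" shows "finite (VV n A)"
proof -
  have "VV n A \<subseteq> Pow {1..n} \<times> ({1..n} \<rightarrow>\<^sub>E insert undefined A)"
  proof
    fix x assume "x \<in> VV n A"
    then obtain T y where x: "x = (T, y)" and T: "T \<subseteq> {1..n}" and y: "y \<in> T \<rightarrow>\<^sub>E A"
      unfolding VV_def by auto
    have "y \<in> {1..n} \<rightarrow>\<^sub>E insert undefined A"
    proof (rule PiE_I)
      fix j assume "j \<in> {1..n}" then show "y j \<in> insert undefined A"
        using y by (cases "j \<in> T") (auto simp: PiE_def extensional_def)
    next
      fix j assume "j \<notin> {1..n}" then have "j \<notin> T" using T by auto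
      then show "y j = undefined" using y by (auto simp: PiE_def extensional_def)
    qed
    then show "x \<in> Pow {1..n} \<times> ({1..n} \<rightarrow>\<^sub>E insert undefined A)" using x T by auto
  qed
  moreover have "finite (Pow {1..n} \<times> ({1..n} \<rightarrow>\<^sub>E insert undefined A))"
    using A by (intro finite_cartesian_product finite_PiE) auto
  ultimately show ?thesis by (rule finite_subset)
qed

lemma double_count:
  assumes fin: "finite S" and S: "S \<subseteq> VV n A"
  shows "(\<Sum>i=1..n. real (card {v\<in>S. Xv i v})) = real (card S) * real (rho n)"
proof -
  have "(\<Sum>i=1..n. real (card {v\<in>S. Xv i v})) = (\<Sum>i=1..n. \<Sum>v\<in>S. if i \<in> fst v then 1 else 0)"
    using fin by (intro sum.cong refl) (simp add: Xv_def sum.inter_filter[symmetric])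
  also have "\<dots> = (\<Sum>v\<in>S. \<Sum>i=1..n. if i \<in> fst v then 1 else 0)" by (rule sum.swap)
  also have "\<dots> = (\<Sum>v\<in>S. real (rho n))"
  proof (intro sum.cong refl)
    fix v assume "v \<in> S"
    then have "v \<in> VV n A" using S by blast
    then have T: "fst v \<subseteq> {1..n}" "card (fst v) = rho n" unfolding VV_def by (cases v, auto)+
    have "(\<Sum>i=1..n. if i \<in> fst v then 1 else 0 :: real) = real (card {i\<in>{1..n}. i \<in> fst v})"
      by (simp add: sum.inter_filter[symmetric])
    also have "{i\<in>{1..n}. i \<in> fst v} = fst v" using T by auto
    finally show "(\<Sum>i=1..n. if i \<in> fst v then 1 else 0 :: real) = real (rho n)" using T by simp
  qed
  finally show ?thesis by simp
qed

lemma binom_lower: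
  assumes k: "0 < k" "k < n"
  shows "1 \<le> real (n+1) * (real (n choose k) * (real k / real n)^k * (1 - real k / real n)^(n-k))"
proof -
  define q where "q = real k / real n"
  define t where "t = (\<lambda>j. real (n choose j) * q^j * (1 - q)^(n-j))"
  have q: "0 < q" "q < 1" using k unfolding q_def by auto
  have t0: "0 \<le> t j" for j unfolding t_def using q by simp
  have sum1: "(\<Sum>j\<le>n. t j) = 1"
    using binomial_ring[of q "1 - q" n] unfolding t_def by simp
  have step: "t (Suc j) * (real (Suc j) * (1 - q)) = t j * (real (n - j) * q)" if j: "j < n" for j
  proof -
    have "Suc j * (n choose Suc j) = (n - j) * (n choose j)"
      using binomial_absorption[of j n] binomial_absorb_comp[of n j] by simp
    then have c: "real (n choose Suc j) * real (Suc j) = real (n choose j) * real (n - j)"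
      by (metis of_nat_mult mult.commute)
    have e: "n - j = Suc (n - Suc j)" using j by simp
    have "t (Suc j) * (real (Suc j) * (1 - q))
        = (real (n choose Suc j) * real (Suc j)) * (q^j * q) * ((1-q)^(n - Suc j) * (1 - q))"
      unfolding t_def by (simp add: ac_simps)
    also have "\<dots> = (real (n choose j) * real (n - j)) * (q^j * q) * ((1-q)^(n - Suc j) * (1 - q))"
      by (simp only: c)
    also have "\<dots> = t j * (real (n - j) * q)"
      unfolding t_def e by (simp add: ac_simps)
    finally show ?thesis .
  qed
  have up: "t j \<le> t (Suc j)" if j: "j < k" for j
  proof -
    have a: "real (Suc j) * (1 - q) > 0" using q by simp
    have "real (n - j) * q - real (Suc j) * (1 - q) = (real n * (real k - real j - 1) + real k) / real n"
      using j k unfolding q_def by (simp add: of_nat_diff field_simps)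
    moreover have "real n * (real k - real j - 1) \<ge> 0" using j by simp
    then have "(real n * (real k - real j - 1) + real k) / real n \<ge> 0" using k by simp
    ultimately have "real (Suc j) * (1 - q) \<le> real (n - j) * q" by linarith
    then have "t j * (real (Suc j) * (1 - q)) \<le> t j * (real (n - j) * q)" using t0 by (intro mult_left_mono) auto
    then have "t j * (real (Suc j) * (1 - q)) \<le> t (Suc j) * (real (Suc j) * (1 - q))"
      using step[of j] j k by simp
    then show ?thesis using a by (rule mult_right_le_imp_le)
  qed
  have down: "t (Suc j) \<le> t j" if j: "k \<le> j" "j < n" for j
  proof -
    have a: "real (Suc j) * (1 - q) > 0" using q by simp
    have "real (n - j) * q - real (Suc j) * (1 - q) = (real n * (real k - real j - 1) + real k) / real n"
      using j k unfolding q_def by (simp add: of_nat_diff field_simps)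
    moreover have "real n * (real k - real j - 1) \<le> - real n" using j by (simp add: mult_le_cancel_left1 algebra_simps)
    then have "real n * (real k - real j - 1) + real k \<le> 0" using k by linarith
    then have "(real n * (real k - real j - 1) + real k) / real n \<le> 0" using k by (simp add: divide_nonpos_pos)
    ultimately have "real (n - j) * q \<le> real (Suc j) * (1 - q)" by linarith
    then have "t j * (real (n - j) * q) \<le> t j * (real (Suc j) * (1 - q))" using t0 by (intro mult_left_mono) auto
    then have "t (Suc j) * (real (Suc j) * (1 - q)) \<le> t j * (real (Suc j) * (1 - q))"
      using step[of j] j by simp
    then show ?thesis using a by (rule mult_right_le_imp_le)
  qed
  have le: "t j \<le> t k" if "j \<le> n" for j
  proof (cases "j \<le> k")
    case True
    show ?thesis using True
    proof (induction k rule: dec_induct)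
      case base then show ?case by simp
    next
      case (step m) then show ?case using up[of m] by linarith
    qed
  next
    case False
    then have "k \<le> j" by simp
    then show ?thesis using that
    proof (induction j rule: dec_induct)
      case base then show ?case by simp
    next
      case (step m) then show ?case using down[of m] by linarith
    qed
  qed
  have "1 \<le> (\<Sum>j\<le>n. t k)" unfolding sum1[symmetric] using le by (intro sum_mono) auto
  then show ?thesis unfolding t_def q_def by simp
qed



lemma asym:
  fixes d :: real assumes d: "d > 0"
  shows "\<exists>N0. \<forall>n\<ge>N0. 0 < rho n \<and> rho n < n \<and> log 2 (real n) > 0 \<and> log 2 (real n + 1) < d * real (rho n)"
proof -
  define f where "f = (\<lambda>n::nat. sqrt (real n) * log 2 (log 2 (real n)))"
  have e1: "eventually (\<lambda>n. f n \<ge> 2) sequentially" unfolding f_def by real_asymp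
  have e2: "eventually (\<lambda>n. f n < real n) sequentially" unfolding f_def by real_asymp
  have e3: "eventually (\<lambda>n. real n > 2) sequentially" by real_asymp
  have lim: "((\<lambda>n. log 2 (real n + 1) / (f n - 1)) \<longlongrightarrow> 0) sequentially" unfolding f_def by real_asymp
  have e4: "eventually (\<lambda>n. log 2 (real n + 1) / (f n - 1) < d) sequentially"
    using order_tendstoD(2)[OF lim d] .
  have "eventually (\<lambda>n. f n \<ge> 2 \<and> f n < real n \<and> real n > 2 \<and> log 2 (real n + 1) / (f n - 1) < d) sequentially"
    using e1 e2 e3 e4 by eventually_elim auto
  then obtain N0 where N0: "\<And>n. n \<ge> N0 \<Longrightarrow> f n \<ge> 2 \<and> f n < real n \<and> real n > 2 \<and> log 2 (real n + 1) / (f n - 1) < d"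
    by (auto simp: eventually_sequentially)
  show ?thesis
  proof (intro exI allI impI)
    fix n assume "n \<ge> N0"
    note h = N0[OF this]
    have fl: "\<lfloor>f n\<rfloor> \<ge> 0" using h by simp
    have "rho n = nat \<lfloor>f n\<rfloor>" unfolding rho_def f_def by simp
    then have r: "real (rho n) = real_of_int \<lfloor>f n\<rfloor>" using fl by simp
    have r1: "f n - 1 < real (rho n)" "real (rho n) \<le> f n" unfolding r
      using real_of_int_floor_add_one_gt[of "f n"] by auto
    have "log 2 (real n + 1) < d * (f n - 1)" using h by (simp add: divide_less_eq)
    also have "\<dots> \<le> d * real (rho n)" using r1 d by simp
    finally have l: "log 2 (real n + 1) < d * real (rho n)" .
    have "0 < rho n" using r1 h by simp
    moreover have "rho n < n" using r1 h by simp
    moreover have "log 2 (real n) > 0" using h by simp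
    ultimately show "0 < rho n \<and> rho n < n \<and> log 2 (real n) > 0 \<and> log 2 (real n + 1) < d * real (rho n)"
      using l by simp
  qed
qed



theorem mainTheorem5:
  fixes A :: "'a set" and \<epsilon>1 \<epsilon>5 :: real
  assumes "finite A"
    and "\<epsilon>1 > 0" and "\<epsilon>5 > 0"
    and "(log 2 (exp 1) / 8) * \<epsilon>5 ^ 4 > 14 * \<epsilon>1"
  shows "\<exists>N. \<forall>n \<ge> N. \<forall>S. S \<subseteq> VV n A \<longrightarrow> S \<noteq> {} \<longrightarrow>
           (\<Sum>i = 1..n. cond_entropy S (Xv i) (prefix i))
              \<ge> (1 - 6 * \<epsilon>1 / log 2 (real n)) * log 2 (real (kk n)) \<longrightarrow>
           real (card {i \<in> {1..n}. \<not> typical_var \<epsilon>5 n S i}) \<le> \<epsilon>5 * real n"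
proof -
  define c where "c = \<epsilon>5^4 / (9 * ln 2)"
  have ln2: "ln (2::real) > 0" by simp
  have lg: "log 2 (exp 1) = 1 / ln 2" by (simp add: log_def)
  have "\<epsilon>5^4 / ln 2 > 112 * \<epsilon>1" using assms(4) unfolding lg by simp
  then have "c > 112 / 9 * \<epsilon>1" unfolding c_def by simp
  then have cgt: "c > 6 * \<epsilon>1" using assms(2) by linarith
  define d where "d = c - 6 * \<epsilon>1"
  have d: "d > 0" using cgt d_def by simp
  obtain N0 where N0: "\<And>n. n \<ge> N0 \<Longrightarrow> 0 < rho n \<and> rho n < n \<and> log 2 (real n) > 0 \<and> log 2 (real n + 1) < d * real (rho n)"
    using asym[OF d] by blast
  show ?thesis
  proof (intro exI allI impI)
    fix n :: nat and S :: "(nat set \<times> (nat \<Rightarrow> 'a)) set"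
    assume n: "n \<ge> N0" and SV: "S \<subseteq> VV n A" and ne: "S \<noteq> {}"
      and hyp: "(\<Sum>i = 1..n. cond_entropy S (Xv i) (prefix i)) \<ge> (1 - 6 * \<epsilon>1 / log 2 (real n)) * log 2 (real (kk n))"
    note h = N0[OF n]
    define B where "B = {i \<in> {1..n}. \<not> typical_var \<epsilon>5 n S i}"
    have cardB: "real (card B) \<le> real n"
    proof -
      have "card B \<le> card {1..n}" unfolding B_def by (intro card_mono) auto
      then show ?thesis by simp
    qed
    show "real (card B) \<le> \<epsilon>5 * real n"
    proof (cases "\<epsilon>5 \<ge> 1")
      case True
      then have "real n \<le> \<epsilon>5 * real n" by (simp add: mult_le_cancel_right1)
      then show ?thesis using cardB by linarith
    next
      case False
      then have e5: "\<epsilon>5 < 1" by simp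
      show ?thesis
      proof (rule ccontr)
        assume "\<not> real (card B) \<le> \<epsilon>5 * real n"
        then have Bbig: "real (card B) > \<epsilon>5 * real n" by simp
        have fin: "finite S" using finite_subset[OF SV finite_VV[OF assms(1)]] .
        define N where "N = real (card S)"
        have N: "N > 0" using fin ne N_def by (simp add: card_gt_0_iff)
        define \<rho> where "\<rho> = rho n"
        define q where "q = real \<rho> / real n"
        have q: "0 < q" "q < 1" using h unfolding q_def \<rho>_def by auto
        have nq: "real n * q = real \<rho>" using h unfolding q_def by simp
        define a where "a = log 2 (1 / q)"
        define b where "b = log 2 (1 / (1 - q))"
        define H where "H = (\<lambda>i. cond_entropy S (Xv i) (prefix i))"
        define cX where "cX = (\<lambda>i. real (card {v\<in>S. Xv i v}))"
        define cN where "cN = (\<lambda>i. real (card {v\<in>S. \<not> Xv i v}))"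
        define Pen where "Pen = (\<lambda>i. (\<Sum>w\<in>prefix i ` S. (sqrt (real (card {v\<in>S. Xv i v \<and> prefix i v = w}))
            - sqrt (real (card {v\<in>S. prefix i v = w}) * q))^2))"
        have mi: "N * H i \<le> cX i * a + cN i * b - Pen i / ln 2" for i
          unfolding N_def H_def cX_def cN_def Pen_def a_def b_def
          using main_i[OF fin ne q, of "Xv i" "prefix i"] by simp
        have cN: "cN i = N - cX i" for i
        proof -
          have "S = {v\<in>S. Xv i v} \<union> {v\<in>S. \<not> Xv i v}" by auto
          then have "card S = card {v\<in>S. Xv i v} + card {v\<in>S. \<not> Xv i v}"
            using fin by (metis (no_types, lifting) card_Un_disjoint disjoint_iff finite_Un mem_Collect_eq)
          then show ?thesis unfolding cN_def cX_def N_def by simp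
        qed
        have sX: "(\<Sum>i=1..n. cX i) = N * real \<rho>" unfolding cX_def N_def \<rho>_def
          using double_count[OF fin SV] .
        have sN: "(\<Sum>i=1..n. cN i) = real n * N - N * real \<rho>"
          unfolding cN using sX by (simp add: sum_subtractf)
        have pen0: "Pen i \<ge> 0" for i unfolding Pen_def by (intro sum_nonneg) auto
        have penB: "N * q * \<epsilon>5^3 / 9 \<le> Pen i" if "i \<in> B" for i
          using pen_bound[OF fin ne assms(3) e5 q_def[unfolded \<rho>_def] q(1)] that
          unfolding B_def Pen_def N_def by auto
        have "real (card B) * (N * q * \<epsilon>5^3 / 9) = (\<Sum>i\<in>B. N * q * \<epsilon>5^3 / 9)" by simp
        also have "\<dots> \<le> (\<Sum>i\<in>B. Pen i)" using penB by (intro sum_mono) auto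
        also have "\<dots> \<le> (\<Sum>i=1..n. Pen i)" using pen0 unfolding B_def by (intro sum_mono2) auto
        finally have sP1: "real (card B) * (N * q * \<epsilon>5^3 / 9) \<le> (\<Sum>i=1..n. Pen i)" .
        have "\<epsilon>5 * real n * (N * q * \<epsilon>5^3 / 9) \<le> real (card B) * (N * q * \<epsilon>5^3 / 9)"
          using Bbig N q assms(3) by (intro mult_right_mono) auto
        also have "\<epsilon>5 * real n * (N * q * \<epsilon>5^3 / 9) = N * real \<rho> * \<epsilon>5^4 / 9"
          using nq by (simp add: power_def algebra_simps)
        finally have sP: "N * real \<rho> * \<epsilon>5^4 / 9 \<le> (\<Sum>i=1..n. Pen i)" using sP1 by linarith
        have "N * (\<Sum>i=1..n. H i) = (\<Sum>i=1..n. N * H i)" by (simp add: sum_distrib_left)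
        also have "\<dots> \<le> (\<Sum>i=1..n. cX i * a + cN i * b - Pen i / ln 2)" using mi by (intro sum_mono) auto
        also have "\<dots> = (\<Sum>i=1..n. cX i) * a + (\<Sum>i=1..n. cN i) * b - (\<Sum>i=1..n. Pen i) / ln 2"
          by (simp add: sum.distrib sum_subtractf sum_distrib_right sum_divide_distrib)
        also have "\<dots> \<le> (N * real \<rho>) * a + (real n * N - N * real \<rho>) * b - (N * real \<rho> * \<epsilon>5^4 / 9) / ln 2"
          unfolding sX sN using divide_right_mono[OF sP, of "ln 2"] ln2 by simp
        also have "\<dots> = N * (real \<rho> * a + (real n - real \<rho>) * b - c * real \<rho>)"
          unfolding c_def by (simp add: algebra_simps)
        finally have "(\<Sum>i=1..n. H i) \<le> real \<rho> * a + (real n - real \<rho>) * b - c * real \<rho>"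
          using N by (simp add: mult_le_cancel_left_pos)
        then have Hup: "(\<Sum>i=1..n. H i) \<le> real \<rho> * a + (real n - real \<rho>) * b - c * real \<rho>" .
        define K where "K = real (kk n)"
        have "0 < n choose rho n" using h by simp
        then have Kpos: "K \<ge> 1" unfolding K_def kk_def by linarith
        have "1 \<le> real (n+1) * (K * q^\<rho> * (1 - q)^(n-\<rho>))"
          using binom_lower[of \<rho> n] h unfolding K_def kk_def q_def \<rho>_def by simp
        then have "0 \<le> log 2 (real (n+1) * (K * q^\<rho> * (1 - q)^(n-\<rho>)))" by simp
        also have "\<dots> = log 2 (real n + 1) + log 2 K + real \<rho> * log 2 q + real (n - \<rho>) * log 2 (1 - q)"
          using Kpos q by (simp add: log_mult log_nat_power add.commute)
        finally have bl: "0 \<le> log 2 (real n + 1) + log 2 K + real \<rho> * log 2 q + real (n - \<rho>) * log 2 (1 - q)" .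
        have ab: "a = - log 2 q" "b = - log 2 (1 - q)" unfolding a_def b_def using q
          by (simp_all add: log_divide)
        have nr: "real (n - \<rho>) = real n - real \<rho>" using h \<rho>_def by simp
        have nh: "real \<rho> * a + (real n - real \<rho>) * b \<le> log 2 K + log 2 (real n + 1)"
          using bl unfolding ab nr by simp
        have Kup: "log 2 K \<le> real \<rho> * log 2 (real n)"
        proof -
          have "kk n \<le> n ^ \<rho>" unfolding kk_def \<rho>_def
          proof -
            have "(n choose rho n) * 1 \<le> (n choose rho n) * fact (rho n)"
              by (intro mult_le_mono2) (simp add: fact_ge_1)
            then show "n choose rho n \<le> n ^ rho n" using binomial_fact_pow[of n "rho n"] by (metis mult.right_neutral order_trans)
          qed
          then have "K \<le> real n ^ \<rho>" unfolding K_def by (metis of_nat_le_iff of_nat_power)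
          then have "log 2 K \<le> log 2 (real n ^ \<rho>)" using Kpos by (intro log_mono) auto
          then show ?thesis by (simp add: log_nat_power)
        qed
        have K0: "log 2 K \<ge> 0" using Kpos by simp
        have "6 * \<epsilon>1 / log 2 (real n) * log 2 K \<le> 6 * \<epsilon>1 * real \<rho>"
        proof -
          have "6 * \<epsilon>1 / log 2 (real n) * log 2 K \<le> 6 * \<epsilon>1 / log 2 (real n) * (real \<rho> * log 2 (real n))"
            using Kup h assms(2) by (intro mult_left_mono) auto
          then show ?thesis using h by simp
        qed
        moreover have "(1 - 6 * \<epsilon>1 / log 2 (real n)) * log 2 K \<le> (\<Sum>i=1..n. H i)"
          using hyp unfolding H_def K_def .
        moreover have "(1 - 6 * \<epsilon>1 / log 2 (real n)) * log 2 K = log 2 K - 6 * \<epsilon>1 / log 2 (real n) * log 2 K"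
          by (simp add: algebra_simps)
        ultimately have "c * real \<rho> \<le> log 2 (real n + 1) + 6 * \<epsilon>1 * real \<rho>"
          using Hup nh by linarith
        then have "d * real \<rho> \<le> log 2 (real n + 1)" unfolding d_def by (simp add: algebra_simps)
        then show False using h \<rho>_def by simp
      qed
    qed
  qed
qed

end
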